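(* Let $G_1$ and $G_2$ be OPERA DAGs with $G_1\sim G_2$. Then the layerings $\phi_{LPL}^{G_1}$ and $\phi_{LPL}^{G_2}$ are consistent: $\phi_{LPL}^{G_1}(v)=\phi_{LPL}^{G_2}(v)$ for every vertex $v$ contained in both $G_1$ and $G_2$. Equivalently, the H-OPERA DAGs obtained from $G_1$ and $G_2$ by the longest-path layering are consistent.
   Context: An OPERA DAG is a finite directed acyclic graph $G=(V,E)$ of events, where an edge $(u,v)$ means that $u$ references its parent $v$. $G[v]$ denotes the subgraph induced on $v$ and all vertices reachable from $v$ (its ancestors), and $G_1\sim G_2$ means $G_1[v]=G_2[v]$ for every $v$ in both DAGs. The longest-path layering $\phi_{LPL}^{G}:V\to\mathbb{Z}$ is defined recursively. $\phi_{LPL}^G(v)=1$ if $v$ has no parents in $G$, and otherwise $\phi_{LPL}^G(v)=1+\max\{\phi_{LPL}^G(u): (v,u)\in E\}$. The H-OPERA DAG is the hierarchical graph $(V,E,\phi_{LPL}^G)$. *)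

theory Defs
  imports Main
begin

text \<open>An OPERA DAG is a finite directed acyclic graph (V, E); an edge (u, v) means that
  event u references its parent v.\<close>

definition opera_dag :: "'a set \<Rightarrow> ('a \<times> 'a) set \<Rightarrow> bool" where
  "opera_dag V E \<longleftrightarrow> finite V \<and> E \<subseteq> V \<times> V \<and> acyclic E"

definition reach :: "('a \<times> 'a) set \<Rightarrow> 'a \<Rightarrow> 'a set" where
  "reach E v = {u. (v, u) \<in> E\<^sup>*}"

definition subdag :: "'a set \<Rightarrow> ('a \<times> 'a) set \<Rightarrow> 'a \<Rightarrow> 'a set \<times> ('a \<times> 'a) set" where
  "subdag V E v = (V \<inter> reach E v, E \<inter> ((V \<inter> reach E v) \<times> (V \<inter> reach E v)))"

definition dag_sim :: "'a set \<Rightarrow> ('a \<times> 'a) set \<Rightarrow> 'a set \<Rightarrow> ('a \<times> 'a) set \<Rightarrow> bool" where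
  "dag_sim V1 E1 V2 E2 \<longleftrightarrow> (\<forall>v \<in> V1 \<inter> V2. subdag V1 E1 v = subdag V2 E2 v)"

definition parents :: "('a \<times> 'a) set \<Rightarrow> 'a \<Rightarrow> 'a set" where
  "parents E v = {u. (v, u) \<in> E}"

text \<open>Longest-path layering, defined by well-founded recursion along the parent relation:
  phi v = 1 if v has no parents, otherwise 1 + max of phi over the parents.
  (The recursion is well-founded when (V, E) is an OPERA DAG.)\<close>
definition phi_LPL :: "('a \<times> 'a) set \<Rightarrow> 'a \<Rightarrow> int" where
  "phi_LPL E = wfrec (E\<inverse>)
     (\<lambda>f v. if parents E v = {} then 1 else 1 + Max (f ` parents E v))"

end

theory Submission
  imports Defs
begin

lemma wf_conv: assumes "opera_dag V E" shows "wf (E\<inverse>)"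
proof -
  have f: "finite E" using assms unfolding opera_dag_def
    by (meson finite_SigmaI finite_subset)
  have "acyclic (E\<inverse>)" using assms unfolding opera_dag_def by (simp add: acyclic_converse)
  then show ?thesis using f by (simp add: wf_iff_acyclic_if_finite)
qed

lemma phi_unfold: assumes "opera_dag V E"
  shows "phi_LPL E v = (if parents E v = {} then 1 else 1 + Max (phi_LPL E ` parents E v))"
proof -
  have w: "wf (E\<inverse>)" using wf_conv[OF assms] .
  have "phi_LPL E v = (\<lambda>f v. if parents E v = {} then 1 else 1 + Max (f ` parents E v))
     (cut (phi_LPL E) (E\<inverse>) v) v"
    unfolding phi_LPL_def by (rule wfrec[OF w])
  moreover have "cut (phi_LPL E) (E\<inverse>) v ` parents E v = phi_LPL E ` parents E v"
    by (auto simp: cut_def parents_def)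
  ultimately show ?thesis by simp
qed

lemma par_eq:
  assumes "opera_dag V1 E1" and "opera_dag V2 E2" and "dag_sim V1 E1 V2 E2"
    and v: "v \<in> V1 \<inter> V2"
  shows "parents E1 v = parents E2 v \<and> parents E1 v \<subseteq> V1 \<inter> V2"
proof -
  have s: "subdag V1 E1 v = subdag V2 E2 v" using assms(3) v unfolding dag_sim_def by blast
  let ?R1 = "V1 \<inter> reach E1 v" let ?R2 = "V2 \<inter> reach E2 v"
  have R: "?R1 = ?R2" and Ee: "E1 \<inter> (?R1 \<times> ?R1) = E2 \<inter> (?R2 \<times> ?R2)"
    using s unfolding subdag_def by auto
  have E1s: "E1 \<subseteq> V1 \<times> V1" and E2s: "E2 \<subseteq> V2 \<times> V2"
    using assms(1,2) unfolding opera_dag_def by auto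
  have vr1: "v \<in> ?R1" using v by (simp add: reach_def)
  have vr2: "v \<in> ?R2" using v by (simp add: reach_def)
  have a: "u \<in> ?R1 \<and> (v,u) \<in> E2" if "(v,u) \<in> E1" for u
  proof -
    have "u \<in> ?R1" using that E1s by (auto simp: reach_def)
    then have "(v,u) \<in> E1 \<inter> (?R1 \<times> ?R1)" using vr1 that by blast
    then show ?thesis using Ee \<open>u \<in> ?R1\<close> by blast
  qed
  have b: "(v,u) \<in> E1" if "(v,u) \<in> E2" for u
  proof -
    have "u \<in> ?R2" using that E2s by (auto simp: reach_def)
    then have "(v,u) \<in> E2 \<inter> (?R2 \<times> ?R2)" using vr2 that by blast
    then show ?thesis using Ee by blast
  qed
  show ?thesis using a b R unfolding parents_def by blast
qed

theorem mainTheorem5: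
  assumes "opera_dag V1 E1" and "opera_dag V2 E2" and "dag_sim V1 E1 V2 E2"
  shows "\<forall>v \<in> V1 \<inter> V2. phi_LPL E1 v = phi_LPL E2 v"
proof
  fix v assume "v \<in> V1 \<inter> V2"
  then show "phi_LPL E1 v = phi_LPL E2 v"
  proof (induction v rule: wf_induct_rule[OF wf_conv[OF assms(1)]])
    case (1 v)
    have p: "parents E1 v = parents E2 v" "parents E1 v \<subseteq> V1 \<inter> V2"
      using par_eq[OF assms 1(2)] by auto
    have "phi_LPL E1 ` parents E1 v = phi_LPL E2 ` parents E2 v"
    proof (rule image_cong)
      fix u assume "u \<in> parents E2 v"
      then show "phi_LPL E1 u = phi_LPL E2 u" using 1(1) p by (auto simp: parents_def)
    qed (rule p(1))
    then show ?case using p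
      by (simp add: phi_unfold[OF assms(1), of v] phi_unfold[OF assms(2), of v])
  qed
qed

end
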